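(* In the safe linear bandit setting and with the ROFUL quantities described in the context, suppose $\mathcal{X}$ is star-convex with respect to the origin, $\|x\|\le1$ for all $x\in\mathcal{X}$, and $\theta^\top x_*>0$. Then, on the event $\mathcal{E}_{\mathrm{conf}}$, ROFUL is equivalent to an algorithm that, for all $t\in[T]$, chooses $$x_t\in\arg\max_{x\in\bar{\mathcal{Y}}_t^p}\left(\hat\theta_t^\top x+\kappa_t(x)\beta_t\|x\|_{V_t^{-1}}\right);$$ that is, for every $t$, the set of actions ROFUL may play at round $t$ (over all admissible choices of the maximizer $\tilde x_t$) coincides with this argmax set.
   Context: Safe linear bandit setting: at round $t$ the learner plays $x_t$ in a closed set $\mathcal{X}\subseteq\mathbb{R}^d$ and observes $y_t=\theta^\top x_t+\epsilon_t$, $z_t=a^\top x_t+\eta_t$, with $\theta,a$ unknown, $b>0$ known; $\mathcal{Y}=\{x\in\mathcal{X}:a^\top x\le b\}$, $x_*\in\arg\max_{\mathcal{Y}}\theta^\top x$. Constants $S_a\ge\|a\|$, $S_\theta\ge\|\theta\|$, $S=\max(S_a,S_\theta)$, $\nu=b/S_a\le 1$, $\rho>0$, $\delta\in(0,1)$, $\lambda\ge1$. ROFUL: at round $t$, $V_t=\lambda I+\sum_{k<t}x_kx_k^\top$, $\hat a_t=V_t^{-1}\sum_{k<t}x_kz_k$, $\hat\theta_t=V_t^{-1}\sum_{k<t}x_ky_k$, $\beta_t=\rho\sqrt{d\log\left(\frac{1+(t-1)/\lambda}{\delta/2}\right)}+\sqrt\lambda S$, $\|x\|_M=\sqrt{x^\top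 Mx}$; $\mathcal{Y}_t^p=\{x\in\mathcal{X}:\hat a_t^\top x+\beta_t\|x\|_{V_t^{-1}}\le b\}$, $\mathcal{Y}_t^o=\{x\in\mathcal{X}:\hat a_t^\top x-\beta_t\|x\|_{V_t^{-1}}\le b\}$; $\tilde x_t\in\arg\max_{x\in\mathcal{Y}_t^o}(\hat\theta_t^\top x+\beta_t\|x\|_{V_t^{-1}})$; $\tilde b_t=\min(\nu/\|\tilde x_t\|,1)$, $\mu_t=\max\{\mu\in[0,1]:\mu\tilde x_t\in\mathcal{Y}_t^p\}$, $\gamma_t=\max(\tilde b_t,\mu_t)$; play $x_t=\gamma_t\tilde x_t$. $\mathcal{E}_{\mathrm{conf}}$ is the event that $|x^\top(\hat\theta_t-\theta)|\le\beta_t\|x\|_{V_t^{-1}}$ and $|x^\top(\hat a_t-a)|\le\beta_t\|x\|_{V_t^{-1}}$ for all $x\in\mathcal{X}$ and all $t\ge1$. Further notation: $\mathbb{B}$ is the closed Euclidean unit ball; $\hat{\mathcal{Y}}_t^p:=\mathcal{Y}_t^p\cup(\nu\mathbb{B}\cap\mathcal{Y}_t^o)$; $\bar{\mathcal{Y}}_t^p:=\{x\in\hat{\mathcal{Y}}_t^p:\zeta x\notin\hat{\mathcal{Y}}_t^p\ \forall\zeta>1\}$; $\alpha_t(x):=\max\{\mu\ge0:\mu x\in\mathcal{Y}_t^o\}$; and for $x\ne0$, $\kappa_t(x):=(\alpha_t(x)-1)\frac{\hat\theta_t^\top x}{\beta_t\|x\|_{V_t^{-1}}}+\alpha_t(x)$.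 *)

theory Defs
  imports "HOL-Analysis.Analysis"
begin

definition outer :: "real^'n \<Rightarrow> real^'n \<Rightarrow> real^'n^'n" where
  "outer x y = (\<chi> i j. x $ i * y $ j)"

definition Vmat :: "real \<Rightarrow> (nat \<Rightarrow> real^'n) \<Rightarrow> nat \<Rightarrow> real^'n^'n" where
  "Vmat lam xs t = lam *\<^sub>R mat 1 + (\<Sum>k\<in>{1..<t}. outer (xs k) (xs k))"

definition est :: "real \<Rightarrow> (nat \<Rightarrow> real^'n) \<Rightarrow> (nat \<Rightarrow> real) \<Rightarrow> nat \<Rightarrow> real^'n" where
  "est lam xs ws t = matrix_inv (Vmat lam xs t) *v (\<Sum>k\<in>{1..<t}. ws k *\<^sub>R xs k)"

definition conf_radius :: "nat \<Rightarrow> real \<Rightarrow> real \<Rightarrow> real \<Rightarrow> real \<Rightarrow> nat \<Rightarrow> real" where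
  "conf_radius d rho delta lam S t =
     rho * sqrt (real d * ln ((1 + real (t - 1) / lam) / (delta / 2))) + sqrt lam * S"

definition wnorm :: "real^'n^'n \<Rightarrow> real^'n \<Rightarrow> real" where
  "wnorm M x = sqrt (x \<bullet> (M *v x))"

definition argmax_on :: "('a \<Rightarrow> real) \<Rightarrow> 'a set \<Rightarrow> 'a set" where
  "argmax_on f A = {x \<in> A. \<forall>y\<in>A. f y \<le> f x}"

text \<open>Pessimistic and optimistic safe sets (M plays the role of V_t^{-1}).\<close>
definition pess_set :: "(real^'n) set \<Rightarrow> real^'n \<Rightarrow> real \<Rightarrow> real^'n^'n \<Rightarrow> real \<Rightarrow> (real^'n) set" where
  "pess_set X ah be M b = {x \<in> X. ah \<bullet> x + be * wnorm M x \<le> b}"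

definition opt_set :: "(real^'n) set \<Rightarrow> real^'n \<Rightarrow> real \<Rightarrow> real^'n^'n \<Rightarrow> real \<Rightarrow> (real^'n) set" where
  "opt_set X ah be M b = {x \<in> X. ah \<bullet> x - be * wnorm M x \<le> b}"

definition roful_gamma :: "(real^'n) set \<Rightarrow> real^'n \<Rightarrow> real \<Rightarrow> real^'n^'n \<Rightarrow> real \<Rightarrow> real \<Rightarrow> real^'n \<Rightarrow> real" where
  "roful_gamma X ah be M b nu xt =
     max (min (nu / norm xt) 1)
         (GREATEST mu. 0 \<le> mu \<and> mu \<le> 1 \<and> mu *\<^sub>R xt \<in> pess_set X ah be M b)"

definition roful_actions :: "(real^'n) set \<Rightarrow> real^'n \<Rightarrow> real^'n \<Rightarrow> real \<Rightarrow> real^'n^'n \<Rightarrow> real \<Rightarrow> real \<Rightarrow> (real^'n) set" where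
  "roful_actions X thh ah be M b nu =
     {roful_gamma X ah be M b nu xt *\<^sub>R xt | xt.
        xt \<in> argmax_on (\<lambda>x. thh \<bullet> x + be * wnorm M x) (opt_set X ah be M b)}"

definition hat_pess :: "(real^'n) set \<Rightarrow> real^'n \<Rightarrow> real \<Rightarrow> real^'n^'n \<Rightarrow> real \<Rightarrow> real \<Rightarrow> (real^'n) set" where
  "hat_pess X ah be M b nu = pess_set X ah be M b \<union> (cball 0 nu \<inter> opt_set X ah be M b)"

definition bar_pess :: "(real^'n) set \<Rightarrow> real^'n \<Rightarrow> real \<Rightarrow> real^'n^'n \<Rightarrow> real \<Rightarrow> real \<Rightarrow> (real^'n) set" where
  "bar_pess X ah be M b nu =
     {x \<in> hat_pess X ah be M b nu. \<forall>\<zeta>>1. \<zeta> *\<^sub>R x \<notin> hat_pess X ah be M b nu}"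

definition alpha_fn :: "(real^'n) set \<Rightarrow> real^'n \<Rightarrow> real \<Rightarrow> real^'n^'n \<Rightarrow> real \<Rightarrow> real^'n \<Rightarrow> real" where
  "alpha_fn X ah be M b x = (GREATEST mu. 0 \<le> mu \<and> mu *\<^sub>R x \<in> opt_set X ah be M b)"

definition kappa_fn :: "(real^'n) set \<Rightarrow> real^'n \<Rightarrow> real^'n \<Rightarrow> real \<Rightarrow> real^'n^'n \<Rightarrow> real \<Rightarrow> real^'n \<Rightarrow> real" where
  "kappa_fn X thh ah be M b x =
     (alpha_fn X ah be M b x - 1) * (thh \<bullet> x) / (be * wnorm M x) + alpha_fn X ah be M b x"

definition alt_objective :: "(real^'n) set \<Rightarrow> real^'n \<Rightarrow> real^'n \<Rightarrow> real \<Rightarrow> real^'n^'n \<Rightarrow> real \<Rightarrow> real^'n \<Rightarrow> real" where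
  "alt_objective X thh ah be M b x = thh \<bullet> x + kappa_fn X thh ah be M b x * be * wnorm M x"

end

theory Submission
  imports Defs "HOL-Analysis.Analysis"
begin


lemma outer_mv: "outer u u *v y = (u \<bullet> y) *\<^sub>R (u::real^'n)"
  by (simp add: vec_eq_iff outer_def matrix_vector_mult_def inner_vec_def sum_distrib_left mult.commute mult.left_commute)

lemma sum_mv: "(\<Sum>k\<in>S. (A k :: real^'n^'m)) *v y = (\<Sum>k\<in>S. A k *v y)"
  by (induction S rule: infinite_finite_induct) (auto simp: matrix_vector_mult_add_rdistrib)

lemma scaleR_mv: "((c::real) *\<^sub>R (A::real^'n^'m)) *v y = c *\<^sub>R (A *v y)"
  by (simp add: vec_eq_iff matrix_vector_mult_def sum_distrib_left mult.assoc)

lemma Vmat_quad: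
  fixes y :: "real^'n"
  shows "y \<bullet> (Vmat lam xs t *v y) = lam * (y \<bullet> y) + (\<Sum>k\<in>{1..<t}. (xs k \<bullet> y)^2)"
  by (simp add: Vmat_def matrix_vector_mult_add_rdistrib sum_mv outer_mv inner_sum_right
      scaleR_mv inner_add_right power2_eq_square inner_commute)

lemma Vmat_quad_ge:
  fixes y :: "real^'n"
  shows "y \<bullet> (Vmat lam xs t *v y) \<ge> lam * (y \<bullet> y)"
  unfolding Vmat_quad by (simp add: sum_nonneg)

lemma Minv_pd:
  fixes x :: "real^'n"
  assumes lam: "lam > 0" and x: "x \<noteq> 0"
  shows "wnorm (matrix_inv (Vmat lam xs t)) x > 0"
proof -
  let ?V = "Vmat lam xs t"
  have ker: "\<forall>y. ?V *v y = 0 \<longrightarrow> y = 0"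
  proof (intro allI impI)
    fix y assume "?V *v y = 0"
    then have "lam * (y \<bullet> y) \<le> 0" using Vmat_quad_ge[where y=y and lam=lam and xs=xs and t=t] by simp
    then have "y \<bullet> y \<le> 0" using lam by (simp add: mult_le_0_iff)
    then show "y = 0" using inner_ge_zero[of y] by (metis inner_eq_zero_iff order_antisym)
  qed
  then have "invertible ?V" using matrix_left_invertible_ker invertible_left_inverse by blast
  then have "?V ** matrix_inv ?V = mat 1"
    unfolding invertible_def matrix_inv_def by (rule someI_ex[THEN conjunct1])
  define y where "y = matrix_inv ?V *v x"
  have xy: "x = ?V *v y" unfolding y_def
    by (simp add: matrix_vector_mul_assoc \<open>?V ** matrix_inv ?V = mat 1\<close>)
  have "y \<noteq> 0" using x xy by auto
  then have "y \<bullet> y > 0" by simp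
  have "x \<bullet> (matrix_inv ?V *v x) = y \<bullet> (?V *v y)" unfolding y_def[symmetric] using xy
    by (simp add: inner_commute)
  also have "\<dots> \<ge> lam * (y \<bullet> y)" by (rule Vmat_quad_ge)
  finally have "x \<bullet> (matrix_inv ?V *v x) > 0" using lam \<open>y \<bullet> y > 0\<close>
    by (smt (verit) mult_pos_pos)
  then show ?thesis unfolding wnorm_def by simp
qed

lemma wnorm_cont: "continuous_on S (wnorm M)"
  unfolding wnorm_def by (intro continuous_intros)

lemma wnorm_scale: "wnorm M (c *\<^sub>R x) = \<bar>c\<bar> * wnorm M x"
proof -
  have "(c *\<^sub>R x) \<bullet> (M *v (c *\<^sub>R x)) = c^2 * (x \<bullet> (M *v x))"
    by (simp add: matrix_vector_mult_scaleR power2_eq_square)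
  then show ?thesis unfolding wnorm_def by (simp add: real_sqrt_mult)
qed


locale rs =
  fixes X :: "(real^'d) set" and thh ah :: "real^'d" and be :: real
    and M :: "real^'d^'d" and b nu :: real
  assumes closedX: "closed X"
    and normX: "\<forall>x\<in>X. norm x \<le> 1"
    and starX: "\<forall>x\<in>X. closed_segment 0 x \<subseteq> X"
    and bpos: "b > 0" and nupos: "nu > 0" and bepos: "be > 0"
    and wpos: "\<And>x. x \<noteq> 0 \<Longrightarrow> wnorm M x > 0"
    and posx: "\<exists>x0\<in>opt_set X ah be M b. thh \<bullet> x0 + be * wnorm M x0 > 0"
begin

abbreviation "w \<equiv> wnorm M"
definition f where "f x = thh \<bullet> x + be * w x"
abbreviation "Yo \<equiv> opt_set X ah be M b"
abbreviation "Yp \<equiv> pess_set X ah be M b"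
abbreviation "H \<equiv> hat_pess X ah be M b nu"
abbreviation "B \<equiv> bar_pess X ah be M b nu"
abbreviation "g \<equiv> alt_objective X thh ah be M b"
abbreviation "al \<equiv> alpha_fn X ah be M b"

lemma w0: "w 0 = 0" by (simp add: wnorm_def)

lemma wnn: "w x \<ge> 0"
  using wpos[of x] w0 by (cases "x = 0") auto

lemma f_scale: "c \<ge> 0 \<Longrightarrow> f (c *\<^sub>R x) = c * f x"
  by (simp add: f_def wnorm_scale algebra_simps)

lemma f0: "f 0 = 0" by (simp add: f_def w0)

lemma f_cont: "continuous_on S f"
  unfolding f_def by (intro continuous_intros wnorm_cont)

lemma seg: "x \<in> X \<Longrightarrow> 0 \<le> \<mu> \<Longrightarrow> \<mu> \<le> 1 \<Longrightarrow> \<mu> *\<^sub>R x \<in> X"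
proof -
  assume "x \<in> X" "0 \<le> \<mu>" "\<mu> \<le> 1"
  then have "\<mu> *\<^sub>R x \<in> closed_segment 0 x"
    unfolding closed_segment_def by (auto intro!: exI[of _ \<mu>])
  then show ?thesis using starX \<open>x \<in> X\<close> by blast
qed

lemma lin_le: "(c::real) \<le> b \<Longrightarrow> 0 \<le> \<mu> \<Longrightarrow> \<mu> \<le> 1 \<Longrightarrow> \<mu> * c \<le> b"
proof -
  assume h: "c \<le> b" "0 \<le> \<mu>" "\<mu> \<le> 1"
  show ?thesis
  proof (cases "c \<le> 0")
    case True then show ?thesis using mult_nonneg_nonpos[of \<mu> c] h bpos by linarith
  next
    case False then show ?thesis using mult_left_le_one_le[of c \<mu>] h by linarith
  qed
qed

lemma Yo_mem: "\<mu> \<ge> 0 \<Longrightarrow> \<mu> *\<^sub>R x \<in> Yo \<longleftrightarrow> \<mu> *\<^sub>R x \<in> X \<and> \<mu> * (ah \<bullet> x - be * w x) \<le> b"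
  by (simp add: opt_set_def wnorm_scale algebra_simps)

lemma Yp_mem: "\<mu> \<ge> 0 \<Longrightarrow> \<mu> *\<^sub>R x \<in> Yp \<longleftrightarrow> \<mu> *\<^sub>R x \<in> X \<and> \<mu> * (ah \<bullet> x + be * w x) \<le> b"
  by (simp add: pess_set_def wnorm_scale algebra_simps)

lemma Yo_star: "x \<in> Yo \<Longrightarrow> 0 \<le> \<mu> \<Longrightarrow> \<mu> \<le> 1 \<Longrightarrow> \<mu> *\<^sub>R x \<in> Yo"
  using Yo_mem[of \<mu> x] seg[of x \<mu>] lin_le[of "ah \<bullet> x - be * w x" \<mu>]
  by (auto simp: opt_set_def)

lemma Yp_sub: "Yp \<subseteq> Yo"
  unfolding pess_set_def opt_set_def using wnn bepos
  by auto (smt (verit) mult_nonneg_nonneg)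

lemma H_sub: "H \<subseteq> Yo"
  unfolding hat_pess_def using Yp_sub by auto

lemma B_H: "B \<subseteq> H"
  unfolding bar_pess_def by auto

lemma B_nz: "x \<in> B \<Longrightarrow> x \<noteq> 0"
  unfolding bar_pess_def by (auto dest: spec[of _ 2])

lemma Yo_closed: "closed Yo"
proof -
  have "Yo = X \<inter> {x. ah \<bullet> x - be * w x \<le> b}" by (auto simp: opt_set_def)
  moreover have "closed {x. ah \<bullet> x - be * w x \<le> b}"
    by (intro closed_Collect_le continuous_intros wnorm_cont)
  ultimately show ?thesis using closedX by auto
qed

lemma Yo_compact: "compact Yo"
proof -
  have "Yo \<subseteq> cball 0 1" using normX by (auto simp: opt_set_def)
  then have "bounded Yo" using bounded_subset bounded_cball by blast
  then show ?thesis using Yo_closed compact_eq_bounded_closed by blast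
qed

lemma Yo_ne: "Yo \<noteq> {}" using posx by auto

lemma zero_Yo: "0 \<in> Yo"
proof -
  obtain x where "x \<in> Yo" using Yo_ne by auto
  then have "x \<in> X" by (simp add: opt_set_def)
  then have "0 \<in> X" using seg[of x 0] by simp
  then show ?thesis using bpos by (simp add: opt_set_def w0)
qed

lemma alpha_ex:
  assumes "x \<in> Yo" "x \<noteq> 0"
  shows "1 \<le> al x \<and> al x *\<^sub>R x \<in> Yo"
proof -
  define S where "S = {\<mu>::real. 0 \<le> \<mu> \<and> \<mu> *\<^sub>R x \<in> Yo}"
  have "S = {0..} \<inter> (\<lambda>\<mu>. \<mu> *\<^sub>R x) -` Yo" by (auto simp: S_def)
  moreover have "closed ((\<lambda>\<mu>::real. \<mu> *\<^sub>R x) -` Yo)"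
    by (intro continuous_closed_vimage Yo_closed continuous_intros)
  ultimately have cS: "closed S" by auto
  have bS: "bdd_above S"
  proof (rule bdd_aboveI)
    fix \<mu> assume "\<mu> \<in> S"
    then have "norm (\<mu> *\<^sub>R x) \<le> 1" "0 \<le> \<mu>" using normX by (auto simp: S_def opt_set_def)
    then have "\<mu> * norm x \<le> 1" by simp
    then show "\<mu> \<le> 1 / norm x" using assms(2) by (simp add: field_simps)
  qed
  have oneS: "1 \<in> S" using assms by (simp add: S_def)
  then have "Sup S \<in> S" using cS bS closed_contains_Sup by blast
  have "al x = Sup S"
    unfolding alpha_fn_def
  proof (rule Greatest_equality)
    show "0 \<le> Sup S \<and> Sup S *\<^sub>R x \<in> Yo" using \<open>Sup S \<in> S\<close> by (simp add: S_def)
    fix y assume "0 \<le> y \<and> y *\<^sub>R x \<in> Yo"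
    then show "y \<le> Sup S" using bS by (intro cSup_upper) (auto simp: S_def)
  qed
  moreover have "1 \<le> Sup S" using oneS bS by (rule cSup_upper)
  ultimately show ?thesis using \<open>Sup S \<in> S\<close> by (simp add: S_def)
qed

lemma g_eq: "x \<noteq> 0 \<Longrightarrow> g x = al x * f x"
proof -
  assume "x \<noteq> 0"
  then have q: "be * w x \<noteq> 0" using wpos[of x] bepos by simp
  have aux: "\<And>u q a. (q::real) \<noteq> 0 \<Longrightarrow> (u / q + a) * q = u + a * q"
    by (simp add: field_simps)
  have "kappa_fn X thh ah be M b x * be * w x = (al x - 1) * (thh \<bullet> x) + al x * (be * w x)"
    unfolding kappa_fn_def mult.assoc[symmetric, of _ be] using aux[OF q, of "(al x - 1) * (thh \<bullet> x)" "al x"]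
    by (simp add: mult.assoc)
  then show ?thesis
    unfolding alt_objective_def f_def
    by (simp add: algebra_simps)
qed

context
  fixes xt assumes xtY: "xt \<in> Yo" and xtmax: "\<forall>y\<in>Yo. f y \<le> f xt"
begin

lemma Fpos: "f xt > 0"
  using posx xtmax by (force simp: f_def)

lemma xt_nz: "xt \<noteq> 0" using Fpos f0 by auto

lemma xtX: "xt \<in> X" using xtY by (simp add: opt_set_def)

lemma R1: "\<mu> \<ge> 0 \<Longrightarrow> \<mu> *\<^sub>R xt \<in> Yo \<longleftrightarrow> \<mu> \<le> 1"
proof
  assume "\<mu> \<ge> 0" "\<mu> *\<^sub>R xt \<in> Yo"
  then have "\<mu> * f xt \<le> f xt" using xtmax f_scale by metis
  then show "\<mu> \<le> 1" using Fpos by (simp add: mult_le_cancel_right1)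
next
  assume "\<mu> \<ge> 0" "\<mu> \<le> 1" then show "\<mu> *\<^sub>R xt \<in> Yo" using Yo_star xtY by blast
qed

definition "cp = ah \<bullet> xt + be * w xt"
definition "p = (if cp \<le> b then 1 else b / cp)"
definition "gm = max (min (nu / norm xt) 1) p"

lemma p_bounds: "0 < p" "p \<le> 1"
  using bpos by (auto simp: p_def field_simps)

lemma R2: "0 \<le> \<mu> \<Longrightarrow> \<mu> \<le> 1 \<Longrightarrow> \<mu> *\<^sub>R xt \<in> Yp \<longleftrightarrow> \<mu> \<le> p"
proof -
  assume h: "0 \<le> \<mu>" "\<mu> \<le> 1"
  then have "\<mu> *\<^sub>R xt \<in> Yp \<longleftrightarrow> \<mu> * cp \<le> b"
    using Yp_mem[of \<mu> xt] seg[OF xtX] by (simp add: cp_def)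
  also have "\<dots> \<longleftrightarrow> \<mu> \<le> p"
  proof (cases "cp \<le> b")
    case True then show ?thesis using lin_le[of cp \<mu>] h by (simp add: p_def)
  next
    case False then have "cp > 0" using bpos by simp
    then show ?thesis using False by (simp add: p_def pos_le_divide_eq)
  qed
  finally show ?thesis .
qed

lemma gamma_eq: "roful_gamma X ah be M b nu xt = gm"
proof -
  have "(GREATEST mu. 0 \<le> mu \<and> mu \<le> 1 \<and> mu *\<^sub>R xt \<in> Yp) = p"
  proof (rule Greatest_equality)
    show "0 \<le> p \<and> p \<le> 1 \<and> p *\<^sub>R xt \<in> Yp" using p_bounds R2[of p] by simp
  next
    fix y assume "0 \<le> y \<and> y \<le> 1 \<and> y *\<^sub>R xt \<in> Yp" then show "y \<le> p" using R2 by blast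
  qed
  then show ?thesis by (simp add: roful_gamma_def gm_def)
qed

lemma gm_pos: "gm > 0" using p_bounds by (simp add: gm_def)

lemma R3: "\<mu> \<ge> 0 \<Longrightarrow> \<mu> *\<^sub>R xt \<in> H \<longleftrightarrow> \<mu> \<le> gm"
proof -
  assume h: "\<mu> \<ge> 0"
  have nx: "norm xt > 0" using xt_nz by simp
  have ball: "\<mu> *\<^sub>R xt \<in> cball 0 nu \<longleftrightarrow> \<mu> \<le> nu / norm xt"
    using h nx by (simp add: pos_le_divide_eq)
  show ?thesis
  proof
    assume "\<mu> *\<^sub>R xt \<in> H"
    then consider "\<mu> *\<^sub>R xt \<in> Yp" | "\<mu> *\<^sub>R xt \<in> cball 0 nu" "\<mu> *\<^sub>R xt \<in> Yo"
      unfolding hat_pess_def by blast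
    then show "\<mu> \<le> gm"
    proof cases
      case 1 then have "\<mu> \<le> 1" using Yp_sub R1 h by blast
      then have "\<mu> \<le> p" using R2 h 1 by blast
      then show ?thesis by (simp add: gm_def)
    next
      case 2 then have "\<mu> \<le> 1" "\<mu> \<le> nu / norm xt" using R1 h ball by auto
      then show ?thesis by (simp add: gm_def)
    qed
  next
    assume "\<mu> \<le> gm"
    then consider "\<mu> \<le> p" | "\<mu> \<le> 1" "\<mu> \<le> nu / norm xt"
      by (auto simp: gm_def max_def min_def split: if_splits)
    then show "\<mu> *\<^sub>R xt \<in> H"
    proof cases
      case 1 then show ?thesis using R2 h p_bounds unfolding hat_pess_def by auto
    next
      case 2 then show ?thesis using R1 h ball unfolding hat_pess_def by auto
    qed
  qed
qed

lemma R4: "s > 0 \<Longrightarrow> s *\<^sub>R xt \<in> B \<longleftrightarrow> s = gm"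
proof
  assume s: "s > 0" "s *\<^sub>R xt \<in> B"
  then have "s \<le> gm" using R3 B_H by force
  moreover have "\<not> s < gm"
  proof
    assume "s < gm"
    then have "gm / s > 1" using s by simp
    moreover have "(gm / s) *\<^sub>R (s *\<^sub>R xt) \<in> H" using s gm_pos R3[of gm] by simp
    ultimately show False using s unfolding bar_pess_def by blast
  qed
  ultimately show "s = gm" by simp
next
  assume "s > 0" "s = gm"
  then show "s *\<^sub>R xt \<in> B" unfolding bar_pess_def using R3 gm_pos
    by (auto simp: mult_le_cancel_right1)
qed

lemma al_gm: "al (gm *\<^sub>R xt) = 1 / gm"
  unfolding alpha_fn_def
proof (rule Greatest_equality)
  show "0 \<le> 1 / gm \<and> (1 / gm) *\<^sub>R gm *\<^sub>R xt \<in> Yo" using gm_pos xtY by simp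
next
  fix y assume "0 \<le> y \<and> y *\<^sub>R gm *\<^sub>R xt \<in> Yo"
  then have "y * gm \<le> 1" using R1[of "y * gm"] gm_pos by simp
  then show "y \<le> 1 / gm" using gm_pos by (simp add: pos_le_divide_eq)
qed

lemma g_gm: "g (gm *\<^sub>R xt) = f xt"
  using g_eq[of "gm *\<^sub>R xt"] xt_nz gm_pos al_gm f_scale[of gm xt] by simp

end

lemma main: "roful_actions X thh ah be M b nu = argmax_on g B"
proof -
  have fe: "(\<lambda>x. thh \<bullet> x + be * wnorm M x) = f" by (simp add: f_def[abs_def])
  have gle: "g y \<le> f xt" if "xt \<in> Yo" "\<forall>y\<in>Yo. f y \<le> f xt" "y \<in> B" for xt y
  proof -
    have "y \<in> Yo" "y \<noteq> 0" using that H_sub B_H B_nz by auto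
    then have "1 \<le> al y" "al y *\<^sub>R y \<in> Yo" using alpha_ex by auto
    then have "f (al y *\<^sub>R y) \<le> f xt" using that by blast
    then show ?thesis using g_eq[OF \<open>y \<noteq> 0\<close>] f_scale[of "al y" y] \<open>1 \<le> al y\<close> by simp
  qed
  show ?thesis
  proof
    show "roful_actions X thh ah be M b nu \<subseteq> argmax_on g B"
    proof
      fix z assume "z \<in> roful_actions X thh ah be M b nu"
      then obtain xt where z: "z = roful_gamma X ah be M b nu xt *\<^sub>R xt"
        and xt: "xt \<in> Yo" "\<forall>y\<in>Yo. f y \<le> f xt"
        unfolding roful_actions_def argmax_on_def fe by blast
      have zB: "z \<in> B" using z gamma_eq[OF xt] R4[OF xt] gm_pos[OF xt] by simp
      have "g z = f xt" using z gamma_eq[OF xt] g_gm[OF xt] by simp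
      then show "z \<in> argmax_on g B" using zB gle[OF xt] by (simp add: argmax_on_def)
    qed
  next
    show "argmax_on g B \<subseteq> roful_actions X thh ah be M b nu"
    proof
      fix z assume "z \<in> argmax_on g B"
      then have zB: "z \<in> B" and zmax: "\<forall>y\<in>B. g y \<le> g z" by (auto simp: argmax_on_def)
      obtain x0 where x0: "x0 \<in> Yo" "\<forall>y\<in>Yo. f y \<le> f x0"
        using continuous_attains_sup[OF Yo_compact Yo_ne f_cont] by blast
      have "gm x0 *\<^sub>R x0 \<in> B" using R4[OF x0] gm_pos[OF x0] by simp
      then have "f x0 \<le> g z" using zmax g_gm[OF x0] by force
      have "z \<in> Yo" "z \<noteq> 0" using zB H_sub B_H B_nz by auto
      then have a1: "1 \<le> al z" and aY: "al z *\<^sub>R z \<in> Yo" using alpha_ex by auto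
      define xt where "xt = al z *\<^sub>R z"
      have "f xt = g z" using g_eq[OF \<open>z \<noteq> 0\<close>] f_scale[of "al z" z] a1 by (simp add: xt_def)
      then have xt: "xt \<in> Yo" "\<forall>y\<in>Yo. f y \<le> f xt"
        using aY x0 \<open>f x0 \<le> g z\<close> by (auto simp: xt_def)
      have zz: "z = (1 / al z) *\<^sub>R xt" using a1 by (simp add: xt_def)
      then have "1 / al z = gm xt" using R4[OF xt, of "1 / al z"] a1 zB by simp
      then have "z = roful_gamma X ah be M b nu xt *\<^sub>R xt" using zz gamma_eq[OF xt] by simp
      then show "z \<in> roful_actions X thh ah be M b nu"
        unfolding roful_actions_def argmax_on_def fe using xt by blast
    qed
  qed
qed

end


theorem proposition1:
  fixes X :: "(real^'d) set" and \<theta> a xstar :: "real^'d"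
    and b Sa Sth rho delta lam :: real
    and xs :: "nat \<Rightarrow> real^'d" and ys zs :: "nat \<Rightarrow> real"
  defines "nu \<equiv> b / Sa"
    and "Minv \<equiv> (\<lambda>t. matrix_inv (Vmat lam xs t))"
    and "thh \<equiv> est lam xs ys"
    and "ah \<equiv> est lam xs zs"
    and "be \<equiv> conf_radius CARD('d) rho delta lam (max Sa Sth)"
  assumes X_closed: "closed X"
    and X_norm: "\<forall>x\<in>X. norm x \<le> 1"
    and X_star: "\<forall>x\<in>X. closed_segment 0 x \<subseteq> X"
    and b_pos: "b > 0"
    and Sa: "Sa > 0" "norm a \<le> Sa"
    and Sth: "norm \<theta> \<le> Sth"
    and nu_le: "nu \<le> 1"
    and rho: "rho > 0"
    and delta: "0 < delta" "delta < 1"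
    and lam: "lam \<ge> 1"
    and xstar_safe: "xstar \<in> X" "a \<bullet> xstar \<le> b"
    and xstar_opt: "\<forall>x\<in>X. a \<bullet> x \<le> b \<longrightarrow> \<theta> \<bullet> x \<le> \<theta> \<bullet> xstar"
    and xstar_pos: "\<theta> \<bullet> xstar > 0"
    and E_conf: "\<forall>t\<ge>1. \<forall>x\<in>X.
        \<bar>x \<bullet> (thh t - \<theta>)\<bar> \<le> be t * wnorm (Minv t) x \<and>
        \<bar>x \<bullet> (ah t - a)\<bar> \<le> be t * wnorm (Minv t) x"
  shows "\<forall>t\<ge>1.
     roful_actions X (thh t) (ah t) (be t) (Minv t) b nu =
     argmax_on (alt_objective X (thh t) (ah t) (be t) (Minv t) b)
               (bar_pess X (ah t) (be t) (Minv t) b nu)"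
proof (intro allI impI)
  fix t :: nat assume t: "t \<ge> 1"
  have nupos: "nu > 0" using b_pos Sa by (simp add: nu_def)
  have bepos: "be t > 0"
  proof -
    have "1 \<le> 1 + real (t - 1) / lam" using lam by simp
    moreover have "1 + real (t - 1) / lam \<le> (1 + real (t - 1) / lam) / (delta / 2)"
    proof -
      have u: "0 \<le> 1 + real (t - 1) / lam" using lam by simp
      have "(1 + real (t - 1) / lam) * (delta / 2) \<le> 1 + real (t - 1) / lam"
        using mult_left_le_one_le[OF u, of "delta / 2"] delta by (simp only: mult.commute)
      moreover have "\<And>u::real. u * (delta / 2) \<le> u \<Longrightarrow> u \<le> u / (delta / 2)"
        using delta by (simp add: le_divide_eq)
      ultimately show ?thesis by blast
    qed
    ultimately have "0 \<le> ln ((1 + real (t - 1) / lam) / (delta / 2))" by simp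
    then have "0 \<le> rho * sqrt (real CARD('d) * ln ((1 + real (t - 1) / lam) / (delta / 2)))"
      using rho by simp
    moreover have "sqrt lam * max Sa Sth > 0" using lam Sa by simp
    ultimately show ?thesis by (simp add: be_def conf_radius_def)
  qed
  have wpos: "\<And>x. x \<noteq> 0 \<Longrightarrow> wnorm (Minv t) x > 0"
    unfolding Minv_def using Minv_pd[of lam] lam by simp
  have E: "\<bar>xstar \<bullet> (thh t - \<theta>)\<bar> \<le> be t * wnorm (Minv t) xstar"
    "\<bar>xstar \<bullet> (ah t - a)\<bar> \<le> be t * wnorm (Minv t) xstar"
    using E_conf t xstar_safe by auto
  have "xstar \<in> opt_set X (ah t) (be t) (Minv t) b"
    using E xstar_safe by (auto simp: opt_set_def inner_diff_right inner_commute)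
  moreover have "thh t \<bullet> xstar + be t * wnorm (Minv t) xstar > 0"
    using E xstar_pos by (auto simp: inner_diff_right inner_commute)
  ultimately have posx: "\<exists>x0\<in>opt_set X (ah t) (be t) (Minv t) b.
      thh t \<bullet> x0 + be t * wnorm (Minv t) x0 > 0" by blast
  interpret rs X "thh t" "ah t" "be t" "Minv t" b nu
    using X_closed X_norm X_star b_pos nupos bepos wpos posx by unfold_locales auto
  show "roful_actions X (thh t) (ah t) (be t) (Minv t) b nu =
     argmax_on (alt_objective X (thh t) (ah t) (be t) (Minv t) b)
               (bar_pess X (ah t) (be t) (Minv t) b nu)" by (rule main)
qed

end
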